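(* Let $X$ be an Archimedean Riesz space with unit $e$ and let $N$ be a proper uniformly closed order ideal of $X$. If $V:X\to\mathbf{R}$ is normalized, monotone, unit-additive, unit-modular and $N$-invariant, then there exists a normalized capacity $\nu:\mathscr{B}(\mathcal{E}_N)\to\mathbf{R}$ such that $$\forall x\in X,\quad V(x)=\int_{\mathcal{E}_N}\langle x,\xi\rangle\,\mathrm{d}\nu(\xi).$$
   Context: A Riesz space is a real vector lattice; it is Archimedean if $0\le nx\le y$ for all $n\in\mathbf{N}$ implies $x=0$. A (strong order) unit is a nonzero $e$ such that every $x$ satisfies $-\lambda e\le x\le\lambda e$ for some $\lambda\ge0$. An order ideal is a solid vector subspace ($|x|\le|y|$, $y\in N$ imply $x\in N$). $N$ is uniformly closed if $x\in N$ whenever there are $x_n\in N$, $y>0$ and reals $\varepsilon_n\downarrow0$ with $|x_n-x|\le\varepsilon_n y$ for all $n$. $X$ carries the norm $\|x\|=\inf\{\lambda\ge0:|x|\le\lambda e\}$; $X^\star$ is its norm dual with the weak$^\star$ topology, $X^\star_+=\{\xi:\langle x,\xi\rangle\ge0\ \forall x\ge0\}$, $\Delta=\{\xi\in X^\star_+:\langle e,\xi\rangle=1\}$, $\Delta_N=\Delta\cap N^\perp$ (functionals in $\Delta$ vanishing on $N$), and $\mathcal{E}_N$ is the set of extreme points of $\Delta_N$, with relative weak$^\star$ topology and Borel $\sigma$-algebra $\mathscr{B}(\mathcal{E}_N)$. A functional $V:X\to\mathbf{R}$ is normalized if $V(\lambda e)=\lambda$ for all $\lambda\in\mathbf{R}$;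 monotone if $x\le y$ implies $V(x)\le V(y)$; unit-additive if $V(x+\lambda e)=V(x)+V(\lambda e)$ for all $x$ and $\lambda\ge0$; unit-modular if $V(x\vee\lambda e)+V(x\wedge\lambda e)=V(x)+V(\lambda e)$ for all $x$ and $\lambda\in\mathbf{R}$; $N$-invariant if $V(x)=V(y)$ whenever $x-y\in N$. A normalized capacity on a $\sigma$-algebra is a monotone set function with value $0$ at $\emptyset$ and $1$ at the whole space; the integral is the Choquet integral $\int f\,\mathrm{d}\nu=\int_0^\infty\nu(f\ge t)\,\mathrm{d}t+\int_{-\infty}^0[\nu(f\ge t)-1]\,\mathrm{d}t$. *)

theory Defs
  imports "HOL-Analysis.Analysis"
begin

text \<open>A Riesz space is modelled as a type of class {ordered_real_vector, lattice}
(a real ordered vector space whose order is a lattice).  Functionals on it are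
functions 'a => real; the space 'a => real carries the product topology
(topology of pointwise convergence), whose subspace topology on the norm dual is
the weak-star topology.\<close>

definition rabs :: "'a::{ordered_real_vector,lattice} \<Rightarrow> 'a" where
  "rabs x = sup x (- x)"

definition archimedean_riesz :: "'a::{ordered_real_vector,lattice} itself \<Rightarrow> bool" where
  "archimedean_riesz _ \<longleftrightarrow>
     (\<forall>x y::'a. (\<forall>n::nat. 0 \<le> real n *\<^sub>R x \<and> real n *\<^sub>R x \<le> y) \<longrightarrow> x = 0)"

definition strong_unit :: "'a::{ordered_real_vector,lattice} \<Rightarrow> bool" where
  "strong_unit e \<longleftrightarrow> e \<noteq> 0 \<and> (\<forall>x. \<exists>l\<ge>0. - (l *\<^sub>R e) \<le> x \<and> x \<le> l *\<^sub>R e)"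

definition order_ideal :: "'a::{ordered_real_vector,lattice} set \<Rightarrow> bool" where
  "order_ideal N \<longleftrightarrow> subspace N \<and> (\<forall>x y. rabs x \<le> rabs y \<and> y \<in> N \<longrightarrow> x \<in> N)"

definition uniformly_closed :: "'a::{ordered_real_vector,lattice} set \<Rightarrow> bool" where
  "uniformly_closed N \<longleftrightarrow>
     (\<forall>x. (\<exists>xs y (eps::nat \<Rightarrow> real). (\<forall>n. xs n \<in> N) \<and> 0 < y \<and> decseq eps \<and> eps \<longlonglongrightarrow> 0
            \<and> (\<forall>n. rabs (xs n - x) \<le> eps n *\<^sub>R y)) \<longrightarrow> x \<in> N)"

definition unit_norm :: "'a::{ordered_real_vector,lattice} \<Rightarrow> 'a \<Rightarrow> real" where
  "unit_norm e x = Inf {l. l \<ge> 0 \<and> rabs x \<le> l *\<^sub>R e}"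

definition norm_dual :: "'a::{ordered_real_vector,lattice} \<Rightarrow> ('a \<Rightarrow> real) set" where
  "norm_dual e = {\<xi>. linear \<xi> \<and> (\<exists>C. \<forall>x. \<bar>\<xi> x\<bar> \<le> C * unit_norm e x)}"

definition Delta :: "'a::{ordered_real_vector,lattice} \<Rightarrow> ('a \<Rightarrow> real) set" where
  "Delta e = {\<xi> \<in> norm_dual e. (\<forall>x\<ge>0. \<xi> x \<ge> 0) \<and> \<xi> e = 1}"

definition Delta_N :: "'a::{ordered_real_vector,lattice} \<Rightarrow> 'a set \<Rightarrow> ('a \<Rightarrow> real) set" where
  "Delta_N e N = Delta e \<inter> {\<xi>. \<forall>x\<in>N. \<xi> x = 0}"

definition extreme_points :: "('a \<Rightarrow> real) set \<Rightarrow> ('a \<Rightarrow> real) set" where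
  "extreme_points S = {\<xi> \<in> S. \<forall>a\<in>S. \<forall>b\<in>S. \<forall>t::real. 0 < t \<and> t < 1 \<and>
       \<xi> = (\<lambda>x. t * a x + (1 - t) * b x) \<longrightarrow> a = b}"

definition E_N :: "'a::{ordered_real_vector,lattice} \<Rightarrow> 'a set \<Rightarrow> ('a \<Rightarrow> real) set" where
  "E_N e N = extreme_points (Delta_N e N)"

definition borel_sub :: "('a \<Rightarrow> real) set \<Rightarrow> ('a \<Rightarrow> real) measure" where
  "borel_sub E = sigma E {U. openin (subtopology euclidean E) U}"

definition normalized_capacity :: "'b measure \<Rightarrow> ('b set \<Rightarrow> real) \<Rightarrow> bool" where
  "normalized_capacity M \<nu> \<longleftrightarrow> \<nu> {} = 0 \<and> \<nu> (space M) = 1 \<and>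
     (\<forall>A\<in>sets M. \<forall>B\<in>sets M. A \<subseteq> B \<longrightarrow> \<nu> A \<le> \<nu> B)"

definition choquet :: "'b measure \<Rightarrow> ('b set \<Rightarrow> real) \<Rightarrow> ('b \<Rightarrow> real) \<Rightarrow> real" where
  "choquet M \<nu> f = integral {0..} (\<lambda>t. \<nu> {\<omega>\<in>space M. f \<omega> \<ge> t})
     + integral {..0} (\<lambda>t. \<nu> {\<omega>\<in>space M. f \<omega> \<ge> t} - 1)"

definition V_normalized :: "'a::{ordered_real_vector,lattice} \<Rightarrow> ('a \<Rightarrow> real) \<Rightarrow> bool" where
  "V_normalized e V \<longleftrightarrow> (\<forall>l. V (l *\<^sub>R e) = l)"
definition V_monotone :: "('a::{ordered_real_vector,lattice} \<Rightarrow> real) \<Rightarrow> bool" where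
  "V_monotone V \<longleftrightarrow> (\<forall>x y. x \<le> y \<longrightarrow> V x \<le> V y)"
definition unit_additive :: "'a::{ordered_real_vector,lattice} \<Rightarrow> ('a \<Rightarrow> real) \<Rightarrow> bool" where
  "unit_additive e V \<longleftrightarrow> (\<forall>x l. l \<ge> 0 \<longrightarrow> V (x + l *\<^sub>R e) = V x + V (l *\<^sub>R e))"
definition unit_modular :: "'a::{ordered_real_vector,lattice} \<Rightarrow> ('a \<Rightarrow> real) \<Rightarrow> bool" where
  "unit_modular e V \<longleftrightarrow>
     (\<forall>x l. V (sup x (l *\<^sub>R e)) + V (inf x (l *\<^sub>R e)) = V x + V (l *\<^sub>R e))"
definition N_invariant :: "'a::{ordered_real_vector,lattice} set \<Rightarrow> ('a \<Rightarrow> real) \<Rightarrow> bool" where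
  "N_invariant N V \<longleftrightarrow> (\<forall>x y. x - y \<in> N \<longrightarrow> V x = V y)"

end

theory Submission
  imports Defs
begin


definition pos :: "'a::{ordered_real_vector,lattice} \<Rightarrow> 'a" where "pos z = sup z 0"


lemma add_sup_l: "(a::'a::{ordered_real_vector,lattice}) + sup b c = sup (a+b) (a+c)"
proof (rule antisym)
  let ?S = "sup (a+b) (a+c)"
  have "b \<le> ?S - a" by (simp add: le_diff_eq add.commute)
  moreover have "c \<le> ?S - a" by (simp add: le_diff_eq add.commute)
  ultimately have "sup b c \<le> ?S - a" by simp
  then show "a + sup b c \<le> ?S" by (simp add: le_diff_eq add.commute)
  show "?S \<le> a + sup b c" by (simp add: add_left_mono)
qed

lemma add_inf_l: "(a::'a::{ordered_real_vector,lattice}) + inf b c = inf (a+b) (a+c)"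
proof (rule antisym)
  let ?S = "inf (a+b) (a+c)"
  have "?S - a \<le> b" by (simp add: diff_le_eq add.commute)
  moreover have "?S - a \<le> c" by (simp add: diff_le_eq add.commute)
  ultimately have "?S - a \<le> inf b c" by simp
  then show "?S \<le> a + inf b c" by (metis diff_le_eq add.commute)
  show "a + inf b c \<le> ?S" by (simp add: add_left_mono)
qed

lemma add_sup_r: "sup b c + (a::'a::{ordered_real_vector,lattice}) = sup (b+a) (c+a)"
  using add_sup_l[of a b c] by (simp add: add.commute)
lemma add_inf_r: "inf b c + (a::'a::{ordered_real_vector,lattice}) = inf (b+a) (c+a)"
  using add_inf_l[of a b c] by (simp add: add.commute)

lemma neg_sup: "- sup a b = inf (- a) (- (b::'a::{ordered_real_vector,lattice}))"
proof (rule antisym)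
  show "- sup a b \<le> inf (- a) (- b)" by simp
  have "a \<le> - inf (- a) (- b)" by (rule le_minus_iff[THEN iffD2]) simp
  moreover have "b \<le> - inf (- a) (- b)" by (rule le_minus_iff[THEN iffD2]) simp
  ultimately have "sup a b \<le> - inf (- a) (- b)" by simp
  then show "inf (- a) (- b) \<le> - sup a b" by (simp add: le_minus_iff)
qed

lemma neg_inf: "- inf a b = sup (- a) (- (b::'a::{ordered_real_vector,lattice}))"
  using neg_sup[of "-a" "-b"] by (metis minus_minus)

lemma scale_sup: "(c::real) \<ge> 0 \<Longrightarrow> c *\<^sub>R sup a b = sup (c *\<^sub>R a) (c *\<^sub>R (b::'a::{ordered_real_vector,lattice}))"
proof (cases "c = 0")
  case False
  assume c: "c \<ge> 0"
  hence cp: "c > 0" using False by simp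
  show ?thesis
  proof (rule antisym)
    have "a \<le> inverse c *\<^sub>R sup (c *\<^sub>R a) (c *\<^sub>R b)"
      using scaleR_left_mono[OF sup_ge1[of "c *\<^sub>R a" "c *\<^sub>R b"], of "inverse c"] cp by simp
    moreover have "b \<le> inverse c *\<^sub>R sup (c *\<^sub>R a) (c *\<^sub>R b)"
      using scaleR_left_mono[OF sup_ge2[of "c *\<^sub>R b" "c *\<^sub>R a"], of "inverse c"] cp by simp
    ultimately have "sup a b \<le> inverse c *\<^sub>R sup (c *\<^sub>R a) (c *\<^sub>R b)" by simp
    from scaleR_left_mono[OF this, of c] cp show "c *\<^sub>R sup a b \<le> sup (c *\<^sub>R a) (c *\<^sub>R b)" by simp
    show "sup (c *\<^sub>R a) (c *\<^sub>R b) \<le> c *\<^sub>R sup a b" using c by (simp add: scaleR_left_mono)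
  qed
qed simp

lemma scale_inf: "(c::real) \<ge> 0 \<Longrightarrow> c *\<^sub>R inf a b = inf (c *\<^sub>R a) (c *\<^sub>R (b::'a::{ordered_real_vector,lattice}))"
proof -
  assume c: "c \<ge> 0"
  have ii: "inf a b = - sup (-a) (-b)" using neg_sup[of "-a" "-b"] by simp
  have "c *\<^sub>R inf a b = - (c *\<^sub>R sup (-a) (-b))" by (subst ii) (simp only: scaleR_minus_right)
  also have "\<dots> = inf (c *\<^sub>R a) (c *\<^sub>R b)" using neg_sup[of "- (c *\<^sub>R a)" "- (c *\<^sub>R b)"] scale_sup[OF c, of "-a" "-b"] by simp
  finally show ?thesis .
qed



lemma pos_ge0[simp]: "0 \<le> pos z" by (simp add: pos_def)
lemma pos_ge[simp]: "z \<le> pos z" by (simp add: pos_def)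
lemma pos_mono: "a \<le> b \<Longrightarrow> pos a \<le> pos b" unfolding pos_def by (meson le_sup_iff order_trans sup_ge1 sup_ge2)
lemma pos_id: "0 \<le> z \<Longrightarrow> pos z = z" by (simp add: pos_def sup_absorb1)
lemma pos_zero: "z \<le> 0 \<Longrightarrow> pos z = 0" by (simp add: pos_def sup_absorb2)
lemma pos_add: "pos (a + b) \<le> pos a + pos b"
  unfolding pos_def[of "a+b"] by (simp add: add_mono add_nonneg_nonneg)
lemma pos_least: "a \<le> c \<Longrightarrow> 0 \<le> c \<Longrightarrow> pos a \<le> c" by (simp add: pos_def)
lemma pos_scale: "(c::real) \<ge> 0 \<Longrightarrow> pos (c *\<^sub>R z) = c *\<^sub>R pos z"
  unfolding pos_def using scale_sup[of c z 0] by simp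

lemma inf0_eq: "inf z 0 = z - pos z"
proof -
  have "z - pos z = z + inf (-z) (-0)" unfolding pos_def using neg_sup[of z 0] by simp
  also have "\<dots> = inf 0 z" using add_inf_l[of z "-z" "-0"] by simp
  finally show ?thesis by (simp add: inf_commute)
qed

lemma pos_neg_eq: "pos (- z) = pos z - z"
proof -
  have "pos (-z) = - inf z 0" unfolding pos_def using neg_inf[of z 0] by simp
  then show ?thesis using inf0_eq[of z] by simp
qed

lemma pos_disj: "inf (pos z) (pos (- z)) = 0"
proof -
  have "inf (pos z) (pos z - z) = pos z + inf 0 (- z)" using add_inf_l[of "pos z" 0 "-z"] by simp
  also have "inf 0 (-z) = - sup 0 z" using neg_sup[of 0 z] by simp
  also have "sup 0 z = pos z" by (simp add: pos_def sup_commute)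
  finally show ?thesis using pos_neg_eq[of z] by simp
qed

lemma rabs_ge[simp]: "z \<le> rabs z" by (simp add: rabs_def)
lemma rabs_ge_neg[simp]: "- z \<le> rabs z" by (simp add: rabs_def)
lemma rabs_least: "x \<le> y \<Longrightarrow> - x \<le> y \<Longrightarrow> rabs x \<le> y" by (simp add: rabs_def)
lemma rabs_ge0[simp]: "0 \<le> rabs (z::'a::{ordered_real_vector,lattice})"
proof -
  have "z + - z \<le> rabs z + rabs z" by (rule add_mono) simp_all
  hence "0 \<le> rabs z + rabs z" by simp
  hence "0 \<le> (1/2::real) *\<^sub>R (rabs z + rabs z)" by (intro scaleR_nonneg_nonneg) simp_all
  also have "(1/2::real) *\<^sub>R (rabs z + rabs z) = (1/2::real) *\<^sub>R (2 *\<^sub>R rabs z)"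
    by (simp only: scaleR_2)
  also have "\<dots> = rabs z" by simp
  finally show ?thesis .
qed
lemma rabs_id: "0 \<le> z \<Longrightarrow> rabs z = z"
  unfolding rabs_def by (rule sup_absorb1) (meson neg_le_0_iff_le order_trans)
lemma rabs_minus[simp]: "rabs (- z) = rabs z" by (simp add: rabs_def sup_commute)
lemma rabs_rabs[simp]: "rabs (rabs z) = rabs z" by (simp add: rabs_id)
lemma pos_le_rabs: "pos z \<le> rabs z" by (rule pos_least) simp_all
lemma rabs_scale: "rabs ((c::real) *\<^sub>R z) = \<bar>c\<bar> *\<^sub>R rabs z"
proof (cases "c \<ge> 0")
  case True
  then show ?thesis unfolding rabs_def using scale_sup[OF True, of z "-z"] by simp
next
  case False
  hence "c *\<^sub>R z = - (\<bar>c\<bar> *\<^sub>R z)" by simp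
  then show ?thesis unfolding rabs_def using scale_sup[of "\<bar>c\<bar>" z "-z"] by (simp add: sup_commute)
qed
lemma rabs_triangle: "rabs (a + b) \<le> rabs a + rabs b"
proof (rule rabs_least)
  show "a + b \<le> rabs a + rabs b" by (simp add: add_mono)
  have "- a + - b \<le> rabs a + rabs b" by (rule add_mono) simp_all
  then show "- (a + b) \<le> rabs a + rabs b" by simp
qed

lemma oi_sub: "order_ideal I \<Longrightarrow> subspace I" by (simp add: order_ideal_def)
lemma oi_0: "order_ideal I \<Longrightarrow> 0 \<in> I" by (simp add: order_ideal_def subspace_0)
lemma oi_add: "order_ideal I \<Longrightarrow> x \<in> I \<Longrightarrow> y \<in> I \<Longrightarrow> x + y \<in> I"
  by (simp add: order_ideal_def subspace_add)
lemma oi_scale: "order_ideal I \<Longrightarrow> x \<in> I \<Longrightarrow> c *\<^sub>R x \<in> I"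
  by (simp add: order_ideal_def subspace_scale)
lemma oi_diff: "order_ideal I \<Longrightarrow> x \<in> I \<Longrightarrow> y \<in> I \<Longrightarrow> x - y \<in> I"
  by (simp add: order_ideal_def subspace_diff)
lemma oi_solid: "order_ideal I \<Longrightarrow> rabs x \<le> rabs y \<Longrightarrow> y \<in> I \<Longrightarrow> x \<in> I"
  by (auto simp add: order_ideal_def)
lemma oi_rabs: "order_ideal I \<Longrightarrow> x \<in> I \<Longrightarrow> rabs x \<in> I"
  by (rule oi_solid) simp_all
lemma oi_le: "order_ideal I \<Longrightarrow> 0 \<le> x \<Longrightarrow> x \<le> y \<Longrightarrow> y \<in> I \<Longrightarrow> x \<in> I"
proof -
  assume a: "order_ideal I" "0 \<le> x" "x \<le> y" "y \<in> I"
  have "rabs x \<le> rabs y" using a(2,3) rabs_ge[of y] by (simp add: rabs_id)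
  with a show ?thesis using oi_solid by blast
qed
lemma oi_pos: "order_ideal I \<Longrightarrow> x \<in> I \<Longrightarrow> pos x \<in> I"
  by (rule oi_le[of I "pos x" "rabs x"]) (simp_all add: pos_le_rabs oi_rabs)



definition gen :: "'a::{ordered_real_vector,lattice} set \<Rightarrow> 'a \<Rightarrow> 'a set" where
  "gen M v = {y. \<exists>m\<in>M. \<exists>k\<ge>0. rabs y \<le> m + k *\<^sub>R rabs v}"

lemma gen_oi: assumes M: "order_ideal M" shows "order_ideal (gen M v)"
  unfolding order_ideal_def
proof (intro conjI allI impI)
  show "subspace (gen M v)"
  proof (rule subspaceI)
    show "0 \<in> gen M v" unfolding gen_def using oi_0[OF M] by (auto simp: rabs_id intro!: exI[of _ 0])
  next
    fix x y assume "x \<in> gen M v" "y \<in> gen M v"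
    then obtain m1 k1 m2 k2 where a: "m1 \<in> M" "k1 \<ge> 0" "rabs x \<le> m1 + k1 *\<^sub>R rabs v"
      "m2 \<in> M" "k2 \<ge> 0" "rabs y \<le> m2 + k2 *\<^sub>R rabs v" unfolding gen_def by blast
    have "rabs (x + y) \<le> rabs x + rabs y" by (rule rabs_triangle)
    also have "\<dots> \<le> (m1 + k1 *\<^sub>R rabs v) + (m2 + k2 *\<^sub>R rabs v)" using a by (intro add_mono) auto
    also have "\<dots> = (m1 + m2) + (k1 + k2) *\<^sub>R rabs v" by (simp add: algebra_simps)
    finally show "x + y \<in> gen M v" unfolding gen_def using a oi_add[OF M a(1) a(4)]
      by (auto intro!: bexI[of _ "m1+m2"] exI[of _ "k1+k2"])
  next
    fix c :: real and x assume "x \<in> gen M v"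
    then obtain m1 k1 where a: "m1 \<in> M" "k1 \<ge> 0" "rabs x \<le> m1 + k1 *\<^sub>R rabs v"
      unfolding gen_def by blast
    have "rabs (c *\<^sub>R x) = \<bar>c\<bar> *\<^sub>R rabs x" by (rule rabs_scale)
    also have "\<dots> \<le> \<bar>c\<bar> *\<^sub>R (m1 + k1 *\<^sub>R rabs v)" using a(3) by (intro scaleR_left_mono) auto
    also have "\<dots> = \<bar>c\<bar> *\<^sub>R m1 + (\<bar>c\<bar> * k1) *\<^sub>R rabs v" by (simp add: algebra_simps)
    finally show "c *\<^sub>R x \<in> gen M v" unfolding gen_def using a oi_scale[OF M a(1)]
      by (auto intro!: bexI[of _ "\<bar>c\<bar> *\<^sub>R m1"] exI[of _ "\<bar>c\<bar> * k1"])
  qed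
next
  fix x y assume "rabs x \<le> rabs y \<and> y \<in> gen M v"
  then show "x \<in> gen M v" unfolding gen_def using order_trans by blast
qed

lemma gen_sup: assumes M: "order_ideal M" shows "M \<subseteq> gen M v"
proof
  fix x assume "x \<in> M"
  then show "x \<in> gen M v" unfolding gen_def using oi_rabs[OF M]
    by (auto intro!: bexI[of _ "rabs x"] exI[of _ 0])
qed

lemma gen_mem: assumes M: "order_ideal M" shows "v \<in> gen M v"
  unfolding gen_def using oi_0[OF M] by (auto intro!: bexI[of _ 0] exI[of _ 1])

lemma chain_union_oi:
  assumes "C \<noteq> {}" "\<forall>I\<in>C. order_ideal I" "\<forall>X\<in>C. \<forall>Y\<in>C. X \<subseteq> Y \<or> Y \<subseteq> X"
  shows "order_ideal (\<Union>C)"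
  unfolding order_ideal_def
proof (intro conjI allI impI)
  show "subspace (\<Union>C)"
  proof (rule subspaceI)
    show "0 \<in> \<Union>C" using assms(1,2) oi_0 by blast
  next
    fix x y assume "x \<in> \<Union>C" "y \<in> \<Union>C"
    then obtain X Y where "X \<in> C" "Y \<in> C" "x \<in> X" "y \<in> Y" by blast
    then show "x + y \<in> \<Union>C" using assms(2,3) oi_add
      by (metis UnionI subsetD)
  next
    fix c :: real and x assume "x \<in> \<Union>C"
    then show "c *\<^sub>R x \<in> \<Union>C" using assms(2) oi_scale by blast
  qed
next
  fix x y assume "rabs x \<le> rabs y \<and> y \<in> \<Union>C"
  then show "x \<in> \<Union>C" using assms(2) oi_solid by blast
qed

lemma max_ideal:
  assumes N: "order_ideal N" and u: "u \<in> I0" and I0: "order_ideal I0" "N \<subseteq> I0" "e \<notin> I0"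
  shows "\<exists>M. order_ideal M \<and> N \<subseteq> M \<and> u \<in> M \<and> e \<notin> M \<and>
     (\<forall>J. order_ideal J \<and> M \<subseteq> J \<and> e \<notin> J \<longrightarrow> J = M)"
proof -
  let ?F = "{I. order_ideal I \<and> N \<subseteq> I \<and> u \<in> I \<and> e \<notin> I}"
  have "\<exists>M\<in>?F. \<forall>X\<in>?F. M \<subseteq> X \<longrightarrow> X = M"
  proof (rule subset_Zorn_nonempty)
    show "?F \<noteq> {}" using u I0 by blast
  next
    fix C assume C: "C \<noteq> {}" "subset.chain ?F C"
    hence CF: "C \<subseteq> ?F" and ch: "\<forall>X\<in>C. \<forall>Y\<in>C. X \<subseteq> Y \<or> Y \<subseteq> X" by (auto simp: subset_chain_def)
    have "order_ideal (\<Union>C)" using chain_union_oi[OF C(1) _ ch] CF by blast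
    moreover have "N \<subseteq> \<Union>C" "u \<in> \<Union>C" using C(1) CF by blast+
    moreover have "e \<notin> \<Union>C" using CF by blast
    ultimately show "\<Union>C \<in> ?F" by blast
  qed
  then obtain M where "M \<in> ?F" "\<forall>X\<in>?F. M \<subseteq> X \<longrightarrow> X = M" by blast
  then show ?thesis by blast
qed

lemma max_total:
  assumes M: "order_ideal M" "e \<notin> M" "0 \<le> e"
    and mx: "\<forall>J. order_ideal J \<and> M \<subseteq> J \<and> e \<notin> J \<longrightarrow> J = M"
  shows "pos z \<in> M \<or> pos (- z) \<in> M"
proof (rule ccontr)
  assume nz: "\<not> (pos z \<in> M \<or> pos (- z) \<in> M)"
  have "e \<in> gen M (pos z)"
  proof (rule ccontr)
    assume "e \<notin> gen M (pos z)"
    hence "gen M (pos z) = M" using mx gen_oi[OF M(1)] gen_sup[OF M(1)] by blast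
    thus False using gen_mem[OF M(1), of "pos z"] nz by auto
  qed
  then obtain m1 k1 where a: "m1 \<in> M" "k1 \<ge> 0" "e \<le> m1 + k1 *\<^sub>R pos z"
    unfolding gen_def using rabs_id[OF M(3)] by (auto simp: rabs_id)
  have "e \<in> gen M (pos (-z))"
  proof (rule ccontr)
    assume "e \<notin> gen M (pos (-z))"
    hence "gen M (pos (-z)) = M" using mx gen_oi[OF M(1)] gen_sup[OF M(1)] by blast
    thus False using gen_mem[OF M(1), of "pos (-z)"] nz by auto
  qed
  then obtain m2 k2 where b: "m2 \<in> M" "k2 \<ge> 0" "e \<le> m2 + k2 *\<^sub>R pos (-z)"
    unfolding gen_def using rabs_id[OF M(3)] by (auto simp: rabs_id)
  define m where "m = rabs m1 + rabs m2"
  define k where "k = k1 + k2"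
  have mM: "m \<in> M" unfolding m_def using a b oi_add oi_rabs M by blast
  have "m1 + k1 *\<^sub>R pos z \<le> m + k *\<^sub>R pos z"
    unfolding m_def k_def using b(2)
    by (intro add_mono) (auto simp: scaleR_add_left intro: order_trans[OF rabs_ge] add_increasing2 scaleR_nonneg_nonneg)
  hence e1: "e \<le> m + k *\<^sub>R pos z" using a(3) by (rule order_trans[rotated])
  have "m2 + k2 *\<^sub>R pos (-z) \<le> m + k *\<^sub>R pos (-z)"
    unfolding m_def k_def using a(2)
    by (intro add_mono) (auto simp: scaleR_add_left intro: order_trans[OF rabs_ge] add_increasing scaleR_nonneg_nonneg)
  hence e2: "e \<le> m + k *\<^sub>R pos (-z)" using b(3) by (rule order_trans[rotated])
  have "e \<le> inf (m + k *\<^sub>R pos z) (m + k *\<^sub>R pos (-z))" using e1 e2 by simp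
  also have "\<dots> = m + k *\<^sub>R inf (pos z) (pos (-z))"
    using add_inf_l[of m "k *\<^sub>R pos z" "k *\<^sub>R pos (-z)"] scale_inf[of k "pos z" "pos (-z)"] a(2) b(2) unfolding k_def by simp
  also have "\<dots> = m" by (simp add: pos_disj)
  finally have "e \<le> m" .
  hence "e \<in> M" using oi_le[OF M(1) M(3) _ mM] by blast
  with M(2) show False ..
qed



locale maxid =
  fixes e :: "'a::{ordered_real_vector,lattice}" and M :: "'a set"
  assumes M: "order_ideal M" and eM: "e \<notin> M" and e0: "0 \<le> e"
    and unit: "\<And>x. \<exists>l\<ge>0. - (l *\<^sub>R e) \<le> x \<and> x \<le> l *\<^sub>R e"
    and tot: "\<And>z. pos z \<in> M \<or> pos (- z) \<in> M"
begin

definition rep :: "'a \<Rightarrow> real \<Rightarrow> bool" where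
  "rep x t \<longleftrightarrow> (\<forall>r>t. pos (x - r *\<^sub>R e) \<in> M) \<and> (\<forall>r<t. pos (r *\<^sub>R e - x) \<in> M)"

lemma inM_le: "0 \<le> w \<Longrightarrow> w \<le> p + q \<Longrightarrow> p \<in> M \<Longrightarrow> q \<in> M \<Longrightarrow> w \<in> M"
  using oi_le[OF M] oi_add[OF M] by blast

lemma e_not: assumes "(c::real) > 0" "c *\<^sub>R e \<le> w" "w \<in> M" shows False
proof -
  have "inverse c *\<^sub>R (c *\<^sub>R e) \<le> inverse c *\<^sub>R w" using assms by (intro scaleR_left_mono) auto
  hence "e \<le> inverse c *\<^sub>R w" using assms(1) by simp
  hence "e \<in> M" using oi_le[OF M e0 _ oi_scale[OF M assms(3)]] by blast
  with eM show False ..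
qed

lemma scale_e_le: "(a::real) \<le> b \<Longrightarrow> a *\<^sub>R e \<le> b *\<^sub>R e"
  using e0 by (simp add: scaleR_right_mono)

lemma rep_unique: assumes "rep x t" "rep x t'" shows "t = t'"
proof (rule ccontr)
  have key: False if "rep x a" "rep x b" "a < b" for a b
  proof -
    define r where "r = a + (b - a)/3"
    define r' where "r' = a + 2*(b - a)/3"
    have rr: "a < r" "r < r'" "r' < b" using \<open>a<b\<close> unfolding r_def r'_def by (auto simp: field_simps)
    have p1: "pos (x - r *\<^sub>R e) \<in> M" using that(1) rr unfolding rep_def by auto
    have p2: "pos (r' *\<^sub>R e - x) \<in> M" using that(2) rr unfolding rep_def by auto
    have "(r' - r) *\<^sub>R e = (x - r *\<^sub>R e) + (r' *\<^sub>R e - x)" by (simp add: algebra_simps)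
    also have "\<dots> \<le> pos (x - r *\<^sub>R e) + pos (r' *\<^sub>R e - x)" by (intro add_mono) simp_all
    finally have "(r' - r) *\<^sub>R e \<le> pos (x - r *\<^sub>R e) + pos (r' *\<^sub>R e - x)" .
    then show False using e_not[of "r' - r"] rr oi_add[OF M p1 p2] by auto
  qed
  assume "t \<noteq> t'"
  then show False using key[OF assms(1) assms(2)] key[OF assms(2) assms(1)] by linarith
qed

lemma rep_exists: "\<exists>t. rep x t"
proof -
  obtain l where l: "l \<ge> 0" "- (l *\<^sub>R e) \<le> x" "x \<le> l *\<^sub>R e" using unit by blast
  define S where "S = {r. pos (x - r *\<^sub>R e) \<in> M}"
  have lS: "l \<in> S" unfolding S_def using l(3) by (simp add: pos_zero oi_0[OF M])
  have lb: "- l \<le> r" if "r \<in> S" for r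
  proof (rule ccontr)
    assume "\<not> - l \<le> r"
    hence c: "- l - r > 0" by simp
    have "(- l - r) *\<^sub>R e = - (l *\<^sub>R e) - r *\<^sub>R e" by (simp add: algebra_simps)
    also have "\<dots> \<le> x - r *\<^sub>R e" using l(2) by simp
    also have "\<dots> \<le> pos (x - r *\<^sub>R e)" by simp
    finally show False using e_not[OF c] that unfolding S_def by auto
  qed
  have ne: "S \<noteq> {}" using lS by blast
  have bdd: "bdd_below S" using lb by (intro bdd_belowI[where m="-l"]) auto
  define t where "t = Inf S"
  have "rep x t" unfolding rep_def
  proof (intro conjI allI impI)
    fix r assume "r > t"
    then obtain s where s: "s \<in> S" "s < r" using cInf_lessD[OF ne] unfolding t_def by blast
    have "pos (x - r *\<^sub>R e) \<le> pos (x - s *\<^sub>R e)"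
      using scale_e_le[of s r] s(2) by (intro pos_mono) simp
    then show "pos (x - r *\<^sub>R e) \<in> M" using oi_le[OF M] s(1) unfolding S_def by auto
  next
    fix r assume "r < t"
    hence "r \<notin> S" using cInf_lower[OF _ bdd] unfolding t_def by force
    hence "pos (- (x - r *\<^sub>R e)) \<in> M" using tot[of "x - r *\<^sub>R e"] unfolding S_def by auto
    then show "pos (r *\<^sub>R e - x) \<in> M" by simp
  qed
  then show ?thesis by blast
qed

definition xi :: "'a \<Rightarrow> real" where "xi x = (THE t. rep x t)"

lemma rep_xi: "rep x (xi x)"
  unfolding xi_def using rep_exists rep_unique by (metis theI)

lemma xi_eq: "rep x t \<Longrightarrow> xi x = t"
  using rep_xi rep_unique by blast

lemma rep_add: assumes "rep x a" "rep y b" shows "rep (x + y) (a + b)"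
  unfolding rep_def
proof (intro conjI allI impI)
  fix r assume r: "r > a + b"
  define d where "d = (r - a - b) / 2"
  have d: "d > 0" "r - (a + d) > b" using r unfolding d_def by (auto simp: field_simps)
  have p1: "pos (x - (a + d) *\<^sub>R e) \<in> M" "pos (y - (r - (a + d)) *\<^sub>R e) \<in> M"
    using assms d unfolding rep_def by auto
  have eq: "x + y - r *\<^sub>R e = (x - (a + d) *\<^sub>R e) + (y - (r - (a + d)) *\<^sub>R e)"
    by (simp add: algebra_simps)
  have "pos (x + y - r *\<^sub>R e) \<le> pos (x - (a + d) *\<^sub>R e) + pos (y - (r - (a + d)) *\<^sub>R e)"
    unfolding eq by (rule pos_add)
  then show "pos (x + y - r *\<^sub>R e) \<in> M" using inM_le p1 by auto
next
  fix r assume r: "r < a + b"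
  define d where "d = (a + b - r) / 2"
  have d: "d > 0" "r - (a - d) < b" using r unfolding d_def by (auto simp: field_simps)
  have p1: "pos ((a - d) *\<^sub>R e - x) \<in> M" "pos ((r - (a - d)) *\<^sub>R e - y) \<in> M"
    using assms d unfolding rep_def by auto
  have eq: "r *\<^sub>R e - (x + y) = ((a - d) *\<^sub>R e - x) + ((r - (a - d)) *\<^sub>R e - y)"
    by (simp add: algebra_simps)
  have "pos (r *\<^sub>R e - (x + y)) \<le> pos ((a - d) *\<^sub>R e - x) + pos ((r - (a - d)) *\<^sub>R e - y)"
    unfolding eq by (rule pos_add)
  then show "pos (r *\<^sub>R e - (x + y)) \<in> M" using inM_le p1 by auto
qed

lemma rep_scale: assumes "rep x a" "(c::real) > 0" shows "rep (c *\<^sub>R x) (c * a)"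
  unfolding rep_def
proof (intro conjI allI impI)
  fix r assume r: "r > c * a"
  hence "r / c > a" using assms(2) by (simp add: field_simps)
  hence "pos (x - (r / c) *\<^sub>R e) \<in> M" using assms unfolding rep_def by auto
  hence "c *\<^sub>R pos (x - (r / c) *\<^sub>R e) \<in> M" by (rule oi_scale[OF M])
  also have "c *\<^sub>R pos (x - (r / c) *\<^sub>R e) = pos (c *\<^sub>R x - r *\<^sub>R e)"
    using assms(2) by (simp add: pos_scale[symmetric] scaleR_diff_right)
  finally show "pos (c *\<^sub>R x - r *\<^sub>R e) \<in> M" .
next
  fix r assume r: "r < c * a"
  hence "r / c < a" using assms(2) by (simp add: field_simps)
  hence "pos ((r / c) *\<^sub>R e - x) \<in> M" using assms unfolding rep_def by auto
  hence "c *\<^sub>R pos ((r / c) *\<^sub>R e - x) \<in> M" by (rule oi_scale[OF M])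
  also have "c *\<^sub>R pos ((r / c) *\<^sub>R e - x) = pos (r *\<^sub>R e - c *\<^sub>R x)"
    using assms(2) by (simp add: pos_scale[symmetric] scaleR_diff_right)
  finally show "pos (r *\<^sub>R e - c *\<^sub>R x) \<in> M" .
qed

lemma rep_neg: assumes "rep x a" shows "rep (- x) (- a)"
  unfolding rep_def
proof (intro conjI allI impI)
  fix r assume "r > - a"
  hence "- r < a" by simp
  hence "pos ((- r) *\<^sub>R e - x) \<in> M" using assms unfolding rep_def by blast
  moreover have "(- r) *\<^sub>R e - x = - x - r *\<^sub>R e" by (simp add: algebra_simps)
  ultimately show "pos (- x - r *\<^sub>R e) \<in> M" by metis
next
  fix r assume "r < - a"
  hence "- r > a" by simp
  hence "pos (x - (- r) *\<^sub>R e) \<in> M" using assms unfolding rep_def by blast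
  moreover have "x - (- r) *\<^sub>R e = r *\<^sub>R e - - x" by (simp add: add.commute)
  ultimately show "pos (r *\<^sub>R e - - x) \<in> M" by metis
qed

lemma rep_sup: assumes "rep x a" "rep y b" shows "rep (sup x y) (max a b)"
  unfolding rep_def
proof (intro conjI allI impI)
  fix r assume r: "r > max a b"
  have p: "pos (x - r *\<^sub>R e) \<in> M" "pos (y - r *\<^sub>R e) \<in> M" using r assms unfolding rep_def by auto
  have "sup x y - r *\<^sub>R e = sup (x - r *\<^sub>R e) (y - r *\<^sub>R e)"
    using add_sup_r[of x y "- (r *\<^sub>R e)"] by simp
  also have "\<dots> \<le> pos (x - r *\<^sub>R e) + pos (y - r *\<^sub>R e)"
    by (intro sup_least) (meson add_increasing2 pos_ge pos_ge0 order_trans add_increasing)+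
  finally have "pos (sup x y - r *\<^sub>R e) \<le> pos (x - r *\<^sub>R e) + pos (y - r *\<^sub>R e)"
    by (intro pos_least) (simp_all add: add_nonneg_nonneg)
  then show "pos (sup x y - r *\<^sub>R e) \<in> M" using inM_le p by auto
next
  fix r assume r: "r < max a b"
  show "pos (r *\<^sub>R e - sup x y) \<in> M"
  proof (cases "r < a")
    case True
    hence "pos (r *\<^sub>R e - x) \<in> M" using assms unfolding rep_def by auto
    moreover have "pos (r *\<^sub>R e - sup x y) \<le> pos (r *\<^sub>R e - x)" by (intro pos_mono diff_left_mono) simp
    ultimately show ?thesis using oi_le[OF M] by auto
  next
    case False
    hence "r < b" using r by simp
    hence "pos (r *\<^sub>R e - y) \<in> M" using assms unfolding rep_def by auto
    moreover have "pos (r *\<^sub>R e - sup x y) \<le> pos (r *\<^sub>R e - y)" by (intro pos_mono diff_left_mono) simp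
    ultimately show ?thesis using oi_le[OF M] by auto
  qed
qed

lemma rep_inf: assumes "rep x a" "rep y b" shows "rep (inf x y) (min a b)"
proof -
  have "rep (- sup (- x) (- y)) (- max (- a) (- b))"
    using rep_neg[OF rep_sup[OF rep_neg[OF assms(1)] rep_neg[OF assms(2)]]] .
  moreover have "- sup (- x) (- y) = inf x y" using neg_sup[of "-x" "-y"] by simp
  moreover have "- max (- a) (- b) = min a b" by simp
  ultimately show ?thesis by simp
qed

lemma rep_e: "rep e 1"
  unfolding rep_def
proof (intro conjI allI impI)
  fix r :: real assume "r > 1"
  hence "e - r *\<^sub>R e \<le> 0" using scale_e_le[of 1 r] by simp
  then show "pos (e - r *\<^sub>R e) \<in> M" by (simp add: pos_zero oi_0[OF M])
next
  fix r :: real assume "r < 1"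
  hence "r *\<^sub>R e - e \<le> 0" using scale_e_le[of r 1] by simp
  then show "pos (r *\<^sub>R e - e) \<in> M" by (simp add: pos_zero oi_0[OF M])
qed

lemma rep_M: assumes "m \<in> M" shows "rep m 0"
  unfolding rep_def
proof (intro conjI allI impI)
  fix r :: real assume "r > 0"
  hence "pos (m - r *\<^sub>R e) \<le> pos m" using scale_e_le[of 0 r] by (intro pos_mono) simp
  then show "pos (m - r *\<^sub>R e) \<in> M" using oi_le[OF M _ _ oi_pos[OF M assms]] by auto
next
  fix r :: real assume "r < 0"
  hence "pos (r *\<^sub>R e - m) \<le> pos (- m)" using scale_e_le[of r 0] by (intro pos_mono) simp
  then show "pos (r *\<^sub>R e - m) \<in> M" using oi_le[OF M _ _ oi_pos[OF M oi_scale[OF M assms, of "-1"]]] by auto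
qed

lemma xi_linear: "linear xi"
proof (rule linearI)
  fix x y show "xi (x + y) = xi x + xi y" by (rule xi_eq, rule rep_add) (rule rep_xi)+
next
  fix c :: real and x
  show "xi (c *\<^sub>R x) = c *\<^sub>R xi x"
  proof (cases "c > 0")
    case True then show ?thesis by (simp, intro xi_eq rep_scale rep_xi)
  next
    case False
    show ?thesis
    proof (cases "c = 0")
      case True
      have "xi 0 = 0" by (intro xi_eq rep_M oi_0[OF M])
      then show ?thesis using True by simp
    next
      case False
      hence c: "- c > 0" using \<open>\<not> c > 0\<close> by simp
      have "rep ((- c) *\<^sub>R x) ((- c) * xi x)" by (intro rep_scale rep_xi c)
      hence "rep (- ((- c) *\<^sub>R x)) (- ((- c) * xi x))" by (rule rep_neg)
      then show ?thesis by (simp, intro xi_eq) simp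
    qed
  qed
qed

lemma xi_sup: "xi (sup x y) = max (xi x) (xi y)" by (intro xi_eq rep_sup rep_xi)
lemma xi_inf: "xi (inf x y) = min (xi x) (xi y)" by (intro xi_eq rep_inf rep_xi)
lemma xi_e: "xi e = 1" by (intro xi_eq rep_e)
lemma xi_M: "m \<in> M \<Longrightarrow> xi m = 0" by (intro xi_eq rep_M)

end



lemma su_e0: assumes "strong_unit e" shows "0 \<le> (e::'a::{ordered_real_vector,lattice})"
proof -
  obtain l where l: "l \<ge> 0" "- (l *\<^sub>R e) \<le> e" using assms unfolding strong_unit_def by blast
  have "0 \<le> e - - (l *\<^sub>R e)" using l(2) by (simp only: diff_ge_0_iff_ge)
  hence "0 \<le> e + l *\<^sub>R e" by simp
  hence h: "0 \<le> (1 + l) *\<^sub>R e" by (simp add: scaleR_add_left)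
  have c: "1 + l > 0" using l(1) by simp
  have "0 \<le> inverse (1 + l) *\<^sub>R ((1 + l) *\<^sub>R e)"
    by (rule scaleR_nonneg_nonneg) (use c h in auto)
  moreover have "inverse (1 + l) *\<^sub>R ((1 + l) *\<^sub>R e) = e" using c by simp
  ultimately show ?thesis by metis
qed

lemma su_bound: "strong_unit e \<Longrightarrow> \<exists>l\<ge>0. - (l *\<^sub>R e) \<le> x \<and> x \<le> l *\<^sub>R e"
  unfolding strong_unit_def by blast

lemma lin_mono: fixes a :: "'a::{ordered_real_vector,lattice} \<Rightarrow> real" assumes "linear a" "\<forall>x\<ge>0. 0 \<le> a x" "x \<le> y" shows "a x \<le> a y"
proof -
  have "0 \<le> y - x" using assms(3) by simp
  hence "0 \<le> a (y - x)" using assms(2) by blast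
  then show ?thesis using linear_diff[OF assms(1)] by simp
qed

lemma hom_pos: fixes \<xi> :: "'a::{ordered_real_vector,lattice} \<Rightarrow> real" assumes "linear \<xi>" "\<forall>a b. \<xi> (sup a b) = max (\<xi> a) (\<xi> b)" "0 \<le> x"
  shows "0 \<le> \<xi> x"
proof -
  have "\<xi> x = \<xi> (sup x 0)" using sup_absorb1[OF assms(3)] by simp
  also have "\<dots> = max (\<xi> x) (\<xi> 0)" using assms(2) by blast
  finally show ?thesis using linear_0[OF assms(1)] by linarith
qed

lemma hom_rabs: fixes \<xi> :: "'a::{ordered_real_vector,lattice} \<Rightarrow> real" assumes "linear \<xi>" "\<forall>a b. \<xi> (sup a b) = max (\<xi> a) (\<xi> b)"
  shows "\<xi> (rabs x) = \<bar>\<xi> x\<bar>"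
  unfolding rabs_def using assms(2) linear_neg[OF assms(1)] by (cases "\<xi> x \<ge> 0") (auto simp: max_def)

lemma Delta_props: fixes a :: "'a::{ordered_real_vector,lattice} \<Rightarrow> real" assumes "a \<in> Delta e"
  shows "linear a" "\<forall>x\<ge>0. 0 \<le> a x" "a e = 1"
  using assms unfolding Delta_def norm_dual_def by auto

lemma hom_unique:
  fixes \<xi> :: "'a::{ordered_real_vector,lattice} \<Rightarrow> real"
  assumes lin: "linear \<xi>" and hs: "\<forall>a b. \<xi> (sup a b) = max (\<xi> a) (\<xi> b)" and he: "\<xi> e = 1"
    and a: "a \<in> Delta e" and t: "t > 0" and le: "\<forall>x\<ge>0. t * a x \<le> \<xi> x"
  shows "a = \<xi>"
proof
  fix x
  note ap = Delta_props[OF a]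
  define y where "y = x - \<xi> x *\<^sub>R e"
  have xy: "\<xi> y = 0" unfolding y_def using linear_diff[OF lin] linear_scale[OF lin] he by simp
  have "\<xi> (rabs y) = 0" using hom_rabs[OF lin hs] xy by simp
  hence "t * a (rabs y) \<le> 0" using le by (metis rabs_ge0)
  moreover have "0 \<le> a (rabs y)" using ap(2) by simp
  ultimately have ar: "a (rabs y) = 0" using t by (simp add: mult_le_0_iff) 
  have "a y \<le> a (rabs y)" by (rule lin_mono[OF ap(1) ap(2)]) simp
  moreover have "a (- y) \<le> a (rabs y)" by (rule lin_mono[OF ap(1) ap(2)]) simp
  ultimately have "a y = 0" using ar linear_neg[OF ap(1)] by simp
  then show "a x = \<xi> x" unfolding y_def using linear_diff[OF ap(1)] linear_scale[OF ap(1)] ap(3) by simp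
qed

lemma hom_in_E:
  fixes \<xi> :: "'a::{ordered_real_vector,lattice} \<Rightarrow> real"
  assumes su: "strong_unit e" and lin: "linear \<xi>"
    and hs: "\<forall>a b. \<xi> (sup a b) = max (\<xi> a) (\<xi> b)" and he: "\<xi> e = 1"
    and hN: "\<forall>x\<in>N. \<xi> x = 0"
  shows "\<xi> \<in> E_N e N"
proof -
  have pos: "\<forall>x\<ge>0. 0 \<le> \<xi> x" using hom_pos[OF lin hs] by blast
  have bnd: "\<bar>\<xi> x\<bar> \<le> 1 * unit_norm e x" for x
  proof -
    obtain l where l: "l \<ge> 0" "- (l *\<^sub>R e) \<le> x" "x \<le> l *\<^sub>R e" using su_bound[OF su] by blast
    have ne: "{l. l \<ge> 0 \<and> rabs x \<le> l *\<^sub>R e} \<noteq> {}"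
      using l by (intro ex_in_conv[THEN iffD1] exI[of _ l]) (auto intro!: rabs_least simp: minus_le_iff)
    have "\<bar>\<xi> x\<bar> \<le> Inf {l. l \<ge> 0 \<and> rabs x \<le> l *\<^sub>R e}"
    proof (rule cInf_greatest[OF ne])
      fix m assume "m \<in> {l. l \<ge> 0 \<and> rabs x \<le> l *\<^sub>R e}"
      hence "\<xi> (rabs x) \<le> \<xi> (m *\<^sub>R e)" using lin_mono[OF lin pos] by blast
      then show "\<bar>\<xi> x\<bar> \<le> m" using hom_rabs[OF lin hs] linear_scale[OF lin] he by simp
    qed
    then show ?thesis unfolding unit_norm_def by simp
  qed
  have D: "\<xi> \<in> Delta_N e N"
    unfolding Delta_N_def Delta_def norm_dual_def using lin bnd pos he hN by blast
  show ?thesis unfolding E_N_def extreme_points_def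
  proof (intro CollectI conjI D ballI allI impI)
    fix a b t assume ab: "a \<in> Delta_N e N" "b \<in> Delta_N e N"
      and tt: "0 < t \<and> t < 1 \<and> \<xi> = (\<lambda>x. t * a x + (1 - t) * b x)"
    have aD: "a \<in> Delta e" "b \<in> Delta e" using ab unfolding Delta_N_def by auto
    have "a = \<xi>"
    proof (rule hom_unique[OF lin hs he aD(1)])
      show "t > 0" using tt by simp
      show "\<forall>x\<ge>0. t * a x \<le> \<xi> x"
      proof (intro allI impI)
        fix x :: 'a assume "0 \<le> x"
        hence "0 \<le> (1 - t) * b x" using Delta_props(2)[OF aD(2)] tt by simp
        then show "t * a x \<le> \<xi> x" using tt by simp
      qed
    qed
    moreover have "b = \<xi>"
    proof (rule hom_unique[OF lin hs he aD(2)])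
      show "1 - t > 0" using tt by simp
      show "\<forall>x\<ge>0. (1 - t) * b x \<le> \<xi> x"
      proof (intro allI impI)
        fix x :: 'a assume "0 \<le> x"
        hence "0 \<le> t * a x" using Delta_props(2)[OF aD(1)] tt by simp
        then show "(1 - t) * b x \<le> \<xi> x" using tt by simp
      qed
    qed
    ultimately show "a = b" by simp
  qed
qed



lemma riesz_decomp:
  fixes a b c :: "'a::{ordered_real_vector,lattice}"
  assumes "0 \<le> a" "0 \<le> b" "0 \<le> c"
  shows "inf a (b + c) \<le> inf a b + inf a c"
proof -
  define d where "d = inf a (b + c)"
  have "d - inf a b = d + sup (- a) (- b)" using neg_inf[of a b] by (simp add: diff_conv_add_uminus del: add_uminus_conv_diff)
  also have "\<dots> = sup (d + - a) (d + - b)" by (rule add_sup_l)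
  also have "\<dots> \<le> c"
  proof (rule sup_least)
    have "d \<le> a" unfolding d_def by simp
    then show "d + - a \<le> c" using assms(3) by (simp add: add.commute order_trans[of _ 0])
    have "d \<le> b + c" unfolding d_def by simp
    hence "d - b \<le> c" by (simp add: diff_le_eq add.commute)
    then show "d + - b \<le> c" by simp
  qed
  finally have 1: "d - inf a b \<le> c" .
  have "0 \<le> inf a b" using assms by simp
  hence 2: "d - inf a b \<le> a" unfolding d_def by (meson diff_le_eq inf_le1 le_add_same_cancel1 order_trans)
  have "d - inf a b \<le> inf a c" using 1 2 by simp
  then show ?thesis unfolding d_def by (metis diff_le_eq add.commute)
qed

lemma inf_scale_zero:
  fixes w u :: "'a::{ordered_real_vector,lattice}"
  assumes "0 \<le> w" "0 \<le> u" "inf w u = 0" "(k::real) \<ge> 0"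
  shows "inf w (k *\<^sub>R u) = 0"
proof (rule antisym)
  define K where "K = max k 1"
  have K: "K \<ge> 1" "k \<le> K" unfolding K_def by auto
  have "w \<le> K *\<^sub>R w"
  proof -
    have "0 \<le> (K - 1) *\<^sub>R w" using K assms(1) by (intro scaleR_nonneg_nonneg) auto
    hence "w \<le> w + (K - 1) *\<^sub>R w" by simp
    also have "\<dots> = K *\<^sub>R w" by (simp add: algebra_simps)
    finally show ?thesis .
  qed
  moreover have "k *\<^sub>R u \<le> K *\<^sub>R u" using K assms(2) by (intro scaleR_right_mono)
  ultimately have "inf w (k *\<^sub>R u) \<le> inf (K *\<^sub>R w) (K *\<^sub>R u)" by (rule inf_mono)
  also have "\<dots> = K *\<^sub>R inf w u" using K by (simp add: scale_inf)
  also have "\<dots> = 0" using assms(3) by simp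
  finally show "inf w (k *\<^sub>R u) \<le> 0" .
  show "0 \<le> inf w (k *\<^sub>R u)" using assms by (simp add: scaleR_nonneg_nonneg)
qed

lemma eps_exists:
  fixes z e :: "'a::{ordered_real_vector,lattice}"
  assumes su: "strong_unit e" and N: "order_ideal N" and uc: "uniformly_closed N"
    and z0: "0 \<le> z" and zN: "z \<notin> N"
  shows "\<exists>\<epsilon>>0. pos (z - \<epsilon> *\<^sub>R e) \<notin> N"
proof (rule ccontr)
  assume "\<not> ?thesis"
  hence allN: "\<forall>\<epsilon>>0. pos (z - \<epsilon> *\<^sub>R e) \<in> N" by blast
  have e0: "0 \<le> e" by (rule su_e0[OF su])
  define eps where "eps n = inverse (real (Suc n))" for n
  define xs where "xs n = pos (z - eps n *\<^sub>R e)" for n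
  have epos: "eps n > 0" for n unfolding eps_def by simp
  have "z \<in> N"
  proof (rule uc[unfolded uniformly_closed_def, rule_format], intro exI conjI allI)
    show "xs n \<in> N" for n unfolding xs_def using allN epos by blast
    show "0 < e" using e0 su unfolding strong_unit_def by (simp add: order.strict_iff_order)
    show "decseq eps" unfolding eps_def by (intro decseq_SucI) (simp add: field_simps)
    show "eps \<longlonglongrightarrow> 0" unfolding eps_def by (rule LIMSEQ_inverse_real_of_nat)
    fix n
    have ee: "0 \<le> eps n *\<^sub>R e" using epos[of n] e0 by (simp add: scaleR_nonneg_nonneg)
    show "rabs (xs n - z) \<le> eps n *\<^sub>R e"
    proof (rule rabs_least)
      have "xs n \<le> z + eps n *\<^sub>R e" unfolding xs_def
      proof (rule pos_least)
        show "z - eps n *\<^sub>R e \<le> z + eps n *\<^sub>R e" using ee by (simp add: algebra_simps)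
        show "0 \<le> z + eps n *\<^sub>R e" using ee z0 by simp
      qed
      then show "xs n - z \<le> eps n *\<^sub>R e" by (simp add: diff_le_eq add.commute)
      have "z - eps n *\<^sub>R e \<le> xs n" unfolding xs_def by simp
      then show "- (xs n - z) \<le> eps n *\<^sub>R e" by (simp add: algebra_simps)
    qed
  qed
  with zN show False ..
qed

lemma e_notin_gen:
  fixes e w u :: "'a::{ordered_real_vector,lattice}"
  assumes su: "strong_unit e" and N: "order_ideal N"
    and w0: "0 \<le> w" and u0: "0 \<le> u" and wu: "inf w u = 0" and wN: "w \<notin> N"
  shows "e \<notin> gen N u"
proof
  assume "e \<in> gen N u"
  then obtain n k where nk: "n \<in> N" "k \<ge> 0" "rabs e \<le> n + k *\<^sub>R rabs u" unfolding gen_def by blast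
  have e0: "0 \<le> e" by (rule su_e0[OF su])
  have "e \<le> rabs n + k *\<^sub>R u" using nk(3) rabs_id[OF e0] rabs_id[OF u0] by (metis add_right_mono order_trans rabs_ge)
  hence "inf w e \<le> inf w (rabs n + k *\<^sub>R u)" by (simp add: le_infI2)
  also have "\<dots> \<le> inf w (rabs n) + inf w (k *\<^sub>R u)"
    using w0 u0 nk(2) by (intro riesz_decomp) (simp_all add: scaleR_nonneg_nonneg)
  also have "\<dots> = inf w (rabs n)" using inf_scale_zero[OF w0 u0 wu nk(2)] by simp
  also have "\<dots> \<le> rabs n" by simp
  finally have "inf w e \<le> rabs n" .
  hence weN: "inf w e \<in> N" using oi_le[OF N _ _ oi_rabs[OF N nk(1)]] w0 e0 by simp
  obtain l where l: "l \<ge> 0" "w \<le> l *\<^sub>R e" using su_bound[OF su] by blast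
  define L where "L = max l 1"
  have L: "L \<ge> 1" "l \<le> L" unfolding L_def by auto
  have "w \<le> L *\<^sub>R w"
  proof -
    have "0 \<le> (L - 1) *\<^sub>R w" using L w0 by (intro scaleR_nonneg_nonneg) auto
    hence "w \<le> w + (L - 1) *\<^sub>R w" by simp
    also have "\<dots> = L *\<^sub>R w" by (simp add: algebra_simps)
    finally show ?thesis .
  qed
  moreover have "w \<le> L *\<^sub>R e" using l(2) L e0 by (meson order_trans scaleR_right_mono)
  ultimately have "w \<le> inf (L *\<^sub>R w) (L *\<^sub>R e)" by simp
  also have "\<dots> = L *\<^sub>R inf w e" using L by (simp add: scale_inf)
  finally have "w \<le> L *\<^sub>R inf w e" .
  hence "w \<in> N" using oi_le[OF N w0 _ oi_scale[OF N weN]] by blast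
  with wN show False ..
qed

lemma hom_exists:
  fixes e z :: "'a::{ordered_real_vector,lattice}"
  assumes su: "strong_unit e" and N: "order_ideal N" and uc: "uniformly_closed N"
    and z0: "0 \<le> z" and zN: "z \<notin> N"
  shows "\<exists>\<xi>. \<xi> \<in> E_N e N \<and> linear \<xi> \<and> (\<forall>a b. \<xi> (sup a b) = max (\<xi> a) (\<xi> b)) \<and>
            (\<forall>a b. \<xi> (inf a b) = min (\<xi> a) (\<xi> b)) \<and> \<xi> e = 1 \<and> 0 < \<xi> z"
proof -
  have e0: "0 \<le> e" by (rule su_e0[OF su])
  obtain \<epsilon> where ep: "\<epsilon> > 0" "pos (z - \<epsilon> *\<^sub>R e) \<notin> N" using eps_exists[OF su N uc z0 zN] by blast
  define w where "w = pos (z - \<epsilon> *\<^sub>R e)"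
  define u where "u = pos (- (z - \<epsilon> *\<^sub>R e))"
  have wu: "inf w u = 0" unfolding w_def u_def by (rule pos_disj)
  have eI: "e \<notin> gen N u" using e_notin_gen[OF su N _ _ wu] ep(2) unfolding w_def u_def by simp
  obtain M where M: "order_ideal M" "N \<subseteq> M" "u \<in> M" "e \<notin> M"
    "\<forall>J. order_ideal J \<and> M \<subseteq> J \<and> e \<notin> J \<longrightarrow> J = M"
    using max_ideal[OF N gen_mem[OF N] gen_oi[OF N] gen_sup[OF N] eI] by blast
  interpret mi: maxid e M
  proof
    show "order_ideal M" "e \<notin> M" "0 \<le> e" using M e0 by auto
    show "\<exists>l\<ge>0. - (l *\<^sub>R e) \<le> x \<and> x \<le> l *\<^sub>R e" for x by (rule su_bound[OF su])
    show "pos z \<in> M \<or> pos (- z) \<in> M" for z by (rule max_total[OF M(1) M(4) e0 M(5)])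
  qed
  let ?\<xi> = "mi.xi"
  have lin: "linear ?\<xi>" by (rule mi.xi_linear)
  have hs: "\<forall>a b. ?\<xi> (sup a b) = max (?\<xi> a) (?\<xi> b)" using mi.xi_sup by blast
  have hi: "\<forall>a b. ?\<xi> (inf a b) = min (?\<xi> a) (?\<xi> b)" using mi.xi_inf by blast
  have hN: "\<forall>x\<in>N. ?\<xi> x = 0" using mi.xi_M M(2) by blast
  have "?\<xi> u = 0" using mi.xi_M M(3) by blast
  moreover have "?\<xi> u = max (\<epsilon> - ?\<xi> z) 0"
  proof -
    have "?\<xi> u = max (?\<xi> (- (z - \<epsilon> *\<^sub>R e))) (?\<xi> 0)" unfolding u_def pos_def using hs by blast
    also have "?\<xi> (- (z - \<epsilon> *\<^sub>R e)) = \<epsilon> - ?\<xi> z"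
      using linear_neg[OF lin] linear_diff[OF lin] linear_scale[OF lin] mi.xi_e by simp
    finally show ?thesis using linear_0[OF lin] by simp
  qed
  ultimately have "?\<xi> z \<ge> \<epsilon>" by simp
  hence "0 < ?\<xi> z" using ep(1) by simp
  moreover have "?\<xi> \<in> E_N e N" by (rule hom_in_E[OF su lin hs mi.xi_e hN])
  ultimately show ?thesis using lin hs hi mi.xi_e by blast
qed



lemma antimono_integrable:
  fixes g :: "real \<Rightarrow> real"
  assumes dec: "\<forall>s t. s \<le> t \<longrightarrow> g t \<le> g s"
  shows "g integrable_on {a..b}"
proof -
  have "mono_on {a..b} (\<lambda>t. - g t)" using dec by (intro mono_onI) simp
  hence "(\<lambda>t. - g t) integrable_on {a..b}" by (rule integrable_on_mono_on)
  then show ?thesis using integrable_neg[of "\<lambda>t. - g t"] by simp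
qed

lemma step_int_bounds:
  fixes g :: "real \<Rightarrow> real"
  assumes dec: "\<forall>s t. s \<le> t \<longrightarrow> g t \<le> g s" and d: "\<delta> \<ge> 0"
  shows "\<delta> * g (c + \<delta>) \<le> integral {c..c+\<delta>} g" "integral {c..c+\<delta>} g \<le> \<delta> * g c"
proof -
  have gi: "g integrable_on {c..c+\<delta>}" by (rule antimono_integrable[OF dec])
  have "integral {c..c+\<delta>} (\<lambda>_. g (c + \<delta>)) \<le> integral {c..c+\<delta>} g"
    by (rule integral_le[OF _ gi]) (use dec in auto)
  then show "\<delta> * g (c + \<delta>) \<le> integral {c..c+\<delta>} g" using d by simp
  have "integral {c..c+\<delta>} g \<le> integral {c..c+\<delta>} (\<lambda>_. g c)"
    by (rule integral_le[OF gi]) (use dec in auto)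
  then show "integral {c..c+\<delta>} g \<le> \<delta> * g c" using d by simp
qed

lemma layer_integral:
  fixes g F :: "real \<Rightarrow> real" and a :: real and P :: nat
  assumes dec: "\<forall>s t. s \<le> t \<longrightarrow> g t \<le> g s"
    and g01: "\<forall>t. 0 \<le> g t \<and> g t \<le> 1"
    and br: "\<And>q c. (1/2^q) * g (c + 1/2^q) \<le> F (c + 1/2^q) - F c"
             "\<And>q c. F (c + 1/2^q) - F c \<le> (1/2^q) * g c"
  shows "F (a + 2^P) - F a = integral {a..a+2^P} g"
proof -
  define d where "d = F (a + 2^P) - F a - integral {a..a+2^P} g"
  have bound: "\<bar>d\<bar> \<le> 1/2^q" for q :: nat
  proof -
    define \<delta> :: real where "\<delta> = 1/2^q"
    have dpos: "\<delta> > 0" unfolding \<delta>_def by simp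
    have claim: "\<bar>F (a + real k * \<delta>) - F a - integral {a..a + real k * \<delta>} g\<bar>
                 \<le> \<delta> * (g a - g (a + real k * \<delta>))" for k :: nat
    proof (induction k)
      case 0
      then show ?case by simp
    next
      case (Suc k)
      define c where "c = a + real k * \<delta>"
      have cs: "a + real (Suc k) * \<delta> = c + \<delta>" unfolding c_def by (simp add: algebra_simps)
      have ac: "a \<le> c" unfolding c_def using dpos by simp
      have comb: "integral {a..c} g + integral {c..c+\<delta>} g = integral {a..c+\<delta>} g"
        by (rule Henstock_Kurzweil_Integration.integral_combine) (use ac dpos antimono_integrable[OF dec] in auto)
      have J: "\<delta> * g (c + \<delta>) \<le> integral {c..c+\<delta>} g" "integral {c..c+\<delta>} g \<le> \<delta> * g c"
        using step_int_bounds[OF dec, of \<delta> c] dpos by auto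
      have Fb: "\<delta> * g (c + \<delta>) \<le> F (c + \<delta>) - F c" "F (c + \<delta>) - F c \<le> \<delta> * g c"
        using br[where q=q and c=c] unfolding \<delta>_def by auto
      have IH: "\<bar>F c - F a - integral {a..c} g\<bar> \<le> \<delta> * (g a - g c)" using Suc.IH unfolding c_def .
      show ?case unfolding cs using IH J Fb comb[symmetric]
        by (simp add: abs_le_iff algebra_simps)
    qed
    have k: "real (2^(P+q)) * \<delta> = 2^P" unfolding \<delta>_def by (simp add: power_add)
    have "\<bar>d\<bar> \<le> \<delta> * (g a - g (a + 2^P))" using claim[of "2^(P+q)"] unfolding k d_def .
    also have "\<dots> \<le> \<delta> * 1" using g01 dpos by (intro mult_left_mono) (auto simp: algebra_simps, smt (verit))
    finally show ?thesis unfolding \<delta>_def by simp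
  qed
  have "d = 0"
  proof (rule ccontr)
    assume "d \<noteq> 0"
    hence "\<bar>d\<bar> > 0" by simp
    then obtain n where "(1/2::real)^n < \<bar>d\<bar>" using real_arch_pow_inv[of "\<bar>d\<bar>" "1/2"] by auto
    with bound[of n] show False by (simp add: power_one_over)
  qed
  then show ?thesis unfolding d_def by simp
qed



locale vctx =
  fixes e :: "'a::{ordered_real_vector,lattice}" and N :: "'a set" and V :: "'a \<Rightarrow> real"
  assumes su: "strong_unit e" and N: "order_ideal N" and uc: "uniformly_closed N"
    and nm: "V_normalized e V" and mo: "V_monotone V" and ua: "unit_additive e V"
    and um: "unit_modular e V" and inv: "N_invariant N V"
begin

definition F :: "'a \<Rightarrow> real \<Rightarrow> real" where "F x t = V (inf x (t *\<^sub>R e))"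
definition ell :: "'a \<Rightarrow> real \<Rightarrow> real \<Rightarrow> 'a" where
  "ell y r h = sup (inf (y - r *\<^sub>R e) (h *\<^sub>R e)) 0"
abbreviation "K \<equiv> E_N e N"
definition L :: "'a \<Rightarrow> real \<Rightarrow> ('a \<Rightarrow> real) set" where "L y r = {\<xi>\<in>K. r \<le> \<xi> y}"
definition Q :: "'a \<Rightarrow> real \<Rightarrow> nat \<Rightarrow> real" where
  "Q y r m = (F y (r + 1/2^m) - F y r) * 2^m"
definition QS :: "('a \<Rightarrow> real) set \<Rightarrow> real set" where
  "QS A = {0} \<union> {Q y r m | y r m. L y r \<subseteq> A}"
definition nu :: "('a \<Rightarrow> real) set \<Rightarrow> real" where "nu A = Sup (QS A)"

lemma e0: "0 \<le> e" by (rule su_e0[OF su])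
lemma Vscale: "V (l *\<^sub>R e) = l" using nm unfolding V_normalized_def by blast
lemma Vmono: "x \<le> y \<Longrightarrow> V x \<le> V y" using mo unfolding V_monotone_def by blast
lemma V0: "V 0 = 0" using Vscale[of 0] by simp
lemma Vinv: "x - y \<in> N \<Longrightarrow> V x = V y" using inv unfolding N_invariant_def by blast
lemma sce: "(a::real) \<le> b \<Longrightarrow> a *\<^sub>R e \<le> b *\<^sub>R e" using e0 by (simp add: scaleR_right_mono)

lemma Vtrans: "V (z + l *\<^sub>R e) = V z + l"
proof (cases "l \<ge> 0")
  case True
  then show ?thesis using ua Vscale unfolding unit_additive_def by simp
next
  case False
  have h1: "V ((z + l *\<^sub>R e) + (- l) *\<^sub>R e) = V (z + l *\<^sub>R e) + V ((- l) *\<^sub>R e)"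
    by (rule ua[unfolded unit_additive_def, rule_format]) (use False in simp)
  have h2: "(z + l *\<^sub>R e) + (- l) *\<^sub>R e = z" by (simp add: algebra_simps)
  have h3: "V ((- l) *\<^sub>R e) = - l" by (rule Vscale)
  show ?thesis using h1 unfolding h2 h3 by linarith
qed

lemma F_diff: assumes h: "0 \<le> h" shows "F y (r + h) - F y r = V (ell y r h)"
proof -
  define A where "A = inf y ((r + h) *\<^sub>R e)"
  have mod: "V (sup A (r *\<^sub>R e)) + V (inf A (r *\<^sub>R e)) = V A + r"
    using um Vscale unfolding unit_modular_def by metis
  have le: "r *\<^sub>R e \<le> (r + h) *\<^sub>R e" using sce h by simp
  have i: "inf A (r *\<^sub>R e) = inf y (r *\<^sub>R e)" unfolding A_def
    by (simp add: inf_assoc inf_absorb2[OF le])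
  have "ell y r h + r *\<^sub>R e = sup (inf (y - r *\<^sub>R e) (h *\<^sub>R e) + r *\<^sub>R e) (0 + r *\<^sub>R e)"
    unfolding ell_def by (rule add_sup_r)
  also have "inf (y - r *\<^sub>R e) (h *\<^sub>R e) + r *\<^sub>R e = inf (y - r *\<^sub>R e + r *\<^sub>R e) (h *\<^sub>R e + r *\<^sub>R e)"
    by (rule add_inf_r)
  also have "y - r *\<^sub>R e + r *\<^sub>R e = y" by simp
  also have "h *\<^sub>R e + r *\<^sub>R e = (r + h) *\<^sub>R e" by (simp add: scaleR_add_left)
  finally have s: "sup A (r *\<^sub>R e) = ell y r h + r *\<^sub>R e" unfolding A_def by simp
  have m2: "V (ell y r h) + r + V (inf y (r *\<^sub>R e)) = V A + r" using mod unfolding s i Vtrans .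
  show ?thesis using m2 unfolding F_def A_def by simp
qed

lemma ell_ge0: "0 \<le> ell y r h" unfolding ell_def by simp
lemma ell_le: "0 \<le> h \<Longrightarrow> ell y r h \<le> h *\<^sub>R e"
  unfolding ell_def using sce[of 0 h] by (intro sup_least) auto
lemma V_ell: "0 \<le> h \<Longrightarrow> 0 \<le> V (ell y r h) \<and> V (ell y r h) \<le> h"
  using Vmono[OF ell_ge0, of y r h] Vmono[OF ell_le, of h y r] V0 Vscale by simp
lemma ell_mono: "r \<le> r' \<Longrightarrow> ell y r' h \<le> ell y r h"
  unfolding ell_def using sce[of r r'] by (intro sup_mono inf_mono) auto

lemma F_incr_dec: "0 \<le> h \<Longrightarrow> r \<le> r' \<Longrightarrow> F y (r' + h) - F y r' \<le> F y (r + h) - F y r"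
  using F_diff Vmono[OF ell_mono] by simp

lemma hom_ell:
  fixes \<xi> :: "'a \<Rightarrow> real"
  assumes lin: "linear \<xi>" and hs: "\<forall>a b. \<xi> (sup a b) = max (\<xi> a) (\<xi> b)"
    and hi: "\<forall>a b. \<xi> (inf a b) = min (\<xi> a) (\<xi> b)" and he: "\<xi> e = 1"
  shows "\<xi> (ell y r h) = max (min (\<xi> y - r) h) 0"
  unfolding ell_def using hs hi linear_diff[OF lin] linear_scale[OF lin] linear_0[OF lin] he by simp

lemma sep:
  assumes w0: "0 \<le> w"
    and H: "\<And>\<xi>. \<xi> \<in> K \<Longrightarrow> linear \<xi> \<Longrightarrow> (\<forall>a b. \<xi> (sup a b) = max (\<xi> a) (\<xi> b)) \<Longrightarrow>
              (\<forall>a b. \<xi> (inf a b) = min (\<xi> a) (\<xi> b)) \<Longrightarrow> \<xi> e = 1 \<Longrightarrow> \<xi> w \<le> 0"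
  shows "w \<in> N"
proof (rule ccontr)
  assume "w \<notin> N"
  then obtain \<xi> where "\<xi> \<in> K" "linear \<xi>" "\<forall>a b. \<xi> (sup a b) = max (\<xi> a) (\<xi> b)"
     "\<forall>a b. \<xi> (inf a b) = min (\<xi> a) (\<xi> b)" "\<xi> e = 1" "0 < \<xi> w"
    using hom_exists[OF su N uc w0] by blast
  with H show False by fastforce
qed

lemma ell_compare:
  assumes h: "0 < h" and sub: "L y r \<subseteq> L x b"
  shows "V (ell y r h) \<le> V (ell x (b - h) h)"
proof -
  define w where "w = pos (ell y r h - ell x (b - h) h)"
  have "w \<in> N" unfolding w_def
  proof (rule sep)
    fix \<xi> :: "'a \<Rightarrow> real"
    assume K: "\<xi> \<in> K" and lin: "linear \<xi>" and hs: "\<forall>a b. \<xi> (sup a b) = max (\<xi> a) (\<xi> b)"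
      and hi: "\<forall>a b. \<xi> (inf a b) = min (\<xi> a) (\<xi> b)" and he: "\<xi> e = 1"
    have ev: "\<xi> (pos (ell y r h - ell x (b - h) h)) =
        max (max (min (\<xi> y - r) h) 0 - max (min (\<xi> x - (b - h)) h) 0) 0"
      unfolding pos_def using hs linear_diff[OF lin] linear_0[OF lin] hom_ell[OF lin hs hi he] by simp
    show "\<xi> (pos (ell y r h - ell x (b - h) h)) \<le> 0"
    proof (cases "r \<le> \<xi> y")
      case True
      hence "\<xi> \<in> L y r" using K unfolding L_def by simp
      hence "b \<le> \<xi> x" using sub unfolding L_def by blast
      then show ?thesis unfolding ev using h by simp
    next
      case False
      then show ?thesis unfolding ev using h by simp
    qed
  qed simp
  have "ell y r h \<le> ell x (b - h) h + w" unfolding w_def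
    using pos_ge[of "ell y r h - ell x (b - h) h"] by (metis diff_le_eq add.commute)
  hence "V (ell y r h) \<le> V (ell x (b - h) h + w)" by (rule Vmono)
  also have "\<dots> = V (ell x (b - h) h)" using \<open>w \<in> N\<close> by (intro Vinv) simp
  finally show ?thesis .
qed

lemma ell_empty:
  assumes "L y r = {}" "0 \<le> h"
  shows "V (ell y r h) = 0"
proof -
  have "ell y r h \<in> N"
  proof (rule sep[OF ell_ge0])
    fix \<xi> :: "'a \<Rightarrow> real"
    assume K: "\<xi> \<in> K" and lin: "linear \<xi>" and hs: "\<forall>a b. \<xi> (sup a b) = max (\<xi> a) (\<xi> b)"
      and hi: "\<forall>a b. \<xi> (inf a b) = min (\<xi> a) (\<xi> b)" and he: "\<xi> e = 1"
    have "\<xi> y < r" using K assms(1) unfolding L_def by force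
    then show "\<xi> (ell y r h) \<le> 0" using hom_ell[OF lin hs hi he] by simp
  qed
  hence "V (ell y r h) = V 0" by (intro Vinv) simp
  then show ?thesis using V0 by simp
qed

lemma Q_bounds: "0 \<le> Q y r m \<and> Q y r m \<le> 1"
proof -
  have "0 \<le> V (ell y r (1/2^m)) \<and> V (ell y r (1/2^m)) \<le> 1/2^m" by (rule V_ell) simp
  then show ?thesis unfolding Q_def using F_diff[of "1/2^m" y r]
    by (simp add: field_simps)
qed

lemma QS_ne: "QS A \<noteq> {}" unfolding QS_def by simp
lemma QS_bdd: "bdd_above (QS A)" unfolding QS_def using Q_bounds by (auto intro!: bdd_aboveI[where M=1])
lemma QS_le1: "x \<in> QS A \<Longrightarrow> x \<le> 1" unfolding QS_def using Q_bounds by auto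
lemma nu_mono: "A \<subseteq> B \<Longrightarrow> nu A \<le> nu B"
  unfolding nu_def by (rule cSup_subset_mono[OF QS_ne QS_bdd]) (auto simp: QS_def)
lemma nu_ge0: "0 \<le> nu A" unfolding nu_def by (rule cSup_upper[OF _ QS_bdd]) (simp add: QS_def)
lemma nu_le1: "nu A \<le> 1" unfolding nu_def by (rule cSup_least[OF QS_ne]) (rule QS_le1)
lemma Q_le_nu: "L y r \<subseteq> A \<Longrightarrow> Q y r m \<le> nu A"
  unfolding nu_def by (rule cSup_upper[OF _ QS_bdd]) (auto simp: QS_def)

lemma nu_empty: "nu {} = 0"
proof (rule antisym[OF _ nu_ge0])
  show "nu {} \<le> 0" unfolding nu_def
  proof (rule cSup_least[OF QS_ne])
    fix x assume "x \<in> QS {}"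
    then show "x \<le> 0" unfolding QS_def Q_def using F_diff ell_empty by auto
  qed
qed

lemma L_e0: "L e 0 = K"
  unfolding L_def E_N_def extreme_points_def Delta_N_def Delta_def by auto

lemma nu_K: "nu K = 1"
proof (rule antisym[OF nu_le1])
  have "Q e 0 0 = V e - V (inf e 0)" unfolding Q_def F_def by simp
  also have "inf e 0 = 0" using e0 by (simp add: inf_absorb2)
  finally have "Q e 0 0 = 1" using Vscale[of 1] V0 by simp
  then show "1 \<le> nu K" using Q_le_nu[of e 0 K 0] L_e0 by simp
qed

lemma F_step: "0 \<le> \<delta> \<Longrightarrow> F y (r + real k * \<delta>) - F y r \<le> real k * (F y (r + \<delta>) - F y r)"
proof (induction k)
  case 0 then show ?case by simp
next
  case (Suc k)
  have "F y (r + real k * \<delta> + \<delta>) - F y (r + real k * \<delta>) \<le> F y (r + \<delta>) - F y r"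
    using F_incr_dec[of \<delta> r "r + real k * \<delta>" y] Suc.prems by simp
  moreover have "r + real (Suc k) * \<delta> = r + real k * \<delta> + \<delta>" by (simp add: algebra_simps)
  ultimately show ?case using Suc by (simp add: algebra_simps)
qed

lemma F_step2: "0 \<le> \<delta> \<Longrightarrow> real k * (F y b - F y (b - \<delta>)) \<le> F y b - F y (b - real k * \<delta>)"
proof (induction k)
  case 0 then show ?case by simp
next
  case (Suc k)
  have "F y (b - real k * \<delta> - \<delta> + \<delta>) - F y (b - real k * \<delta> - \<delta>) \<ge> F y (b - \<delta> + \<delta>) - F y (b - \<delta>)"
    using F_incr_dec[of \<delta> "b - real k * \<delta> - \<delta>" "b - \<delta>" y] Suc.prems by (simp add: mult_nonneg_nonneg)
  moreover have "b - real (Suc k) * \<delta> = b - real k * \<delta> - \<delta>" by (simp add: algebra_simps)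
  ultimately show ?case using Suc by (simp add: algebra_simps)
qed

lemma lower_br: "F x (c + 1/2^q) - F x c \<le> (1/2^q) * nu (L x c)"
proof -
  have "Q x c q \<le> nu (L x c)" by (rule Q_le_nu) simp
  then show ?thesis unfolding Q_def by (simp add: field_simps)
qed

lemma upper_br: "(1/2^q) * nu (L x (c + 1/2^q)) \<le> F x (c + 1/2^q) - F x c"
proof -
  define \<delta> :: real where "\<delta> = 1/2^q"
  define D where "D = F x (c + \<delta>) - F x c"
  have D0: "0 \<le> D" unfolding D_def using F_diff[of \<delta> x c] V_ell[of \<delta> x c] by (simp add: \<delta>_def)
  have "nu (L x (c + \<delta>)) \<le> 2^q * D" unfolding nu_def
  proof (rule cSup_least[OF QS_ne])
    fix z assume "z \<in> QS (L x (c + \<delta>))"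
    then consider "z = 0" | y r m where "z = Q y r m" "L y r \<subseteq> L x (c + \<delta>)" unfolding QS_def by blast
    then show "z \<le> 2^q * D"
    proof cases
      case 1 then show ?thesis using D0 by simp
    next
      case 2
      have Dy: "F y (r + \<delta>) - F y r \<le> D"
      proof -
        have "V (ell y r \<delta>) \<le> V (ell x (c + \<delta> - \<delta>) \<delta>)" by (rule ell_compare) (use 2 in \<open>simp_all add: \<delta>_def\<close>)
        then show ?thesis unfolding D_def using F_diff[of \<delta> y r] F_diff[of \<delta> x c] by (simp add: \<delta>_def)
      qed
      show ?thesis
      proof (cases "m \<le> q")
        case True
        define k :: nat where "k = 2^(q - m)"
        have rk: "real k = 2^(q-m)" unfolding k_def by simp
        have pq: "(2::real)^(q-m) * 2^m = 2^q" using True by (simp add: power_add[symmetric])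
        have kd: "real k * \<delta> = 1/2^m" unfolding rk \<delta>_def using pq by (simp add: field_simps)
        have km: "(2::real)^m * real k = 2^q" unfolding rk using True
          by (simp add: power_add[symmetric])
        have "F y (r + 1/2^m) - F y r \<le> real k * (F y (r + \<delta>) - F y r)"
          using F_step[of \<delta> y r k] kd by (simp add: \<delta>_def)
        hence "Q y r m \<le> 2^m * (real k * (F y (r + \<delta>) - F y r))" unfolding Q_def by (simp add: mult.commute)
        also have "\<dots> = 2^q * (F y (r + \<delta>) - F y r)" using km by (simp add: mult.assoc[symmetric])
        also have "\<dots> \<le> 2^q * D" using Dy by simp
        finally show ?thesis using 2 by simp
      next
        case False
        define h :: real where "h = 1/2^m"
        define k :: nat where "k = 2^(m - q)"
        have hpos: "0 < h" unfolding h_def by simp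
        have rk: "real k = 2^(m-q)" unfolding k_def by simp
        have pq: "(2::real)^(m-q) * 2^q = 2^m" using False by (simp add: power_add[symmetric])
        have kh: "real k * h = \<delta>" unfolding rk h_def \<delta>_def using pq by (simp add: field_simps)
        have km: "(2::real)^q * real k = 2^m" unfolding rk using False
          by (simp add: power_add[symmetric])
        have "V (ell y r h) \<le> V (ell x (c + \<delta> - h) h)" by (rule ell_compare[OF hpos]) (use 2 in simp)
        hence "F y (r + h) - F y r \<le> F x (c + \<delta> - h + h) - F x (c + \<delta> - h)"
          using F_diff[of h y r] F_diff[of h x "c + \<delta> - h"] hpos by simp
        hence a: "F y (r + h) - F y r \<le> F x (c + \<delta>) - F x (c + \<delta> - h)" by simp
        have b: "real k * (F x (c + \<delta>) - F x (c + \<delta> - h)) \<le> F x (c + \<delta>) - F x (c + \<delta> - real k * h)"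
          by (rule F_step2) (use hpos in simp)
        have "Q y r m = 2^m * (F y (r + h) - F y r)" unfolding Q_def h_def by simp
        also have "\<dots> \<le> 2^m * (F x (c + \<delta>) - F x (c + \<delta> - h))" using a by simp
        also have "\<dots> = 2^q * (real k * (F x (c + \<delta>) - F x (c + \<delta> - h)))" using km by (simp add: mult.assoc[symmetric])
        also have "\<dots> \<le> 2^q * D" using b unfolding kh D_def by simp
        finally show ?thesis using 2 by simp
      qed
    qed
  qed
  then show ?thesis unfolding D_def \<delta>_def by (simp add: field_simps)
qed

end



context vctx begin

lemma space_bs: "space (borel_sub K) = K"
  unfolding borel_sub_def by (simp add: space_measure_of_conv)

lemma K_bounds:
  assumes "\<xi> \<in> K" "- (l *\<^sub>R e) \<le> x" "x \<le> l *\<^sub>R e"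
  shows "- l \<le> \<xi> x \<and> \<xi> x \<le> l"
proof -
  have D: "\<xi> \<in> Delta e" using assms(1) unfolding E_N_def extreme_points_def Delta_N_def by auto
  note p = Delta_props[OF D]
  have "\<xi> x \<le> \<xi> (l *\<^sub>R e)" by (rule lin_mono[OF p(1) p(2) assms(3)])
  moreover have "\<xi> (- (l *\<^sub>R e)) \<le> \<xi> x" by (rule lin_mono[OF p(1) p(2) assms(2)])
  ultimately show ?thesis using linear_scale[OF p(1)] linear_neg[OF p(1)] p(3) by simp
qed

lemma repr: "V x = choquet (borel_sub K) nu (\<lambda>\<xi>. \<xi> x)"
proof -
  obtain l where l: "l \<ge> 0" "- (l *\<^sub>R e) \<le> x" "x \<le> l *\<^sub>R e" using su_bound[OF su] by blast
  obtain p where p: "l < 2^p" using real_arch_pow[of 2 l] by auto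
  define lam :: real where "lam = 2^p"
  have lampos: "lam > 0" unfolding lam_def by simp
  have xl: "- (lam *\<^sub>R e) \<le> x" "x \<le> lam *\<^sub>R e"
  proof -
    have le: "l *\<^sub>R e \<le> lam *\<^sub>R e" using sce[of l lam] p unfolding lam_def by simp
    hence "- (lam *\<^sub>R e) \<le> - (l *\<^sub>R e)" by simp
    then show "- (lam *\<^sub>R e) \<le> x" using l(2) by (rule order_trans)
    show "x \<le> lam *\<^sub>R e" using l(3) le by (rule order_trans)
  qed
  define g where "g t = nu (L x t)" for t
  have dec: "\<forall>s t. s \<le> t \<longrightarrow> g t \<le> g s" unfolding g_def L_def by (auto intro!: nu_mono)
  have g01: "\<forall>t. 0 \<le> g t \<and> g t \<le> 1" unfolding g_def using nu_ge0 nu_le1 by auto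
  have ghi: "g t = 0" if "t > lam" for t
  proof -
    have "L x t = {}" unfolding L_def using K_bounds[OF _ xl] that by force
    then show ?thesis unfolding g_def using nu_empty by simp
  qed
  have glo: "g t = 1" if "t \<le> - lam" for t
  proof -
    have "L x t = K" unfolding L_def using K_bounds[OF _ xl] that by force
    then show ?thesis unfolding g_def using nu_K by simp
  qed
  have Fhi: "F x lam = V x" unfolding F_def using xl by (simp add: inf_absorb1)
  have Flo: "F x (- lam) = - lam" unfolding F_def using xl Vscale[of "- lam"] by (simp add: inf_absorb2)
  have lay: "F x (- lam + 2^(p+1)) - F x (- lam) = integral {- lam..- lam + 2^(p+1)} g"
  proof (rule layer_integral[OF dec g01])
    show "(1/2^q) * g (c + 1/2^q) \<le> F x (c + 1/2^q) - F x c" for q c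
      unfolding g_def by (rule upper_br)
    show "F x (c + 1/2^q) - F x c \<le> (1/2^q) * g c" for q c
      unfolding g_def by (rule lower_br)
  qed
  have ll: "- lam + 2^(p+1) = lam" unfolding lam_def by simp
  have I: "V x = integral {- lam..lam} g - lam" using lay unfolding ll Fhi Flo by simp
  have gi: "g integrable_on {a..b}" for a b by (rule antimono_integrable[OF dec])
  have c1: "integral {0..} g = integral {0..lam} g"
  proof -
    have eq: "(\<lambda>t. if t \<in> {..lam} then g t else 0) = g"
    proof (rule ext)
      fix t show "(if t \<in> {..lam} then g t else 0) = g t" using ghi[of t] by (cases "t \<le> lam") auto
    qed
    have "integral {0..} g = integral ({..lam} \<inter> {0..}) g"
      using integral_restrict_Int[of "{0..}" "{..lam}" g] unfolding eq .
    also have "{..lam} \<inter> {0..} = {0..lam}" by auto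
    finally show ?thesis .
  qed
  have c2: "integral {..0} (\<lambda>t. g t - 1) = integral {- lam..0} g - lam"
  proof -
    have eq: "(\<lambda>t. if t \<in> {- lam..} then g t - 1 else 0) = (\<lambda>t. g t - 1)"
    proof (rule ext)
      fix t show "(if t \<in> {- lam..} then g t - 1 else 0) = g t - 1" using glo[of t] by (cases "- lam \<le> t") auto
    qed
    have "integral {..0} (\<lambda>t. g t - 1) = integral ({- lam..} \<inter> {..0}) (\<lambda>t. g t - 1)"
      using integral_restrict_Int[of "{..0}" "{- lam..}" "\<lambda>t. g t - 1"] unfolding eq .
    also have "{- lam..} \<inter> {..0} = {- lam..0}" by auto
    also have "integral {- lam..0} (\<lambda>t. g t - 1) = integral {- lam..0} g - integral {- lam..0} (\<lambda>t. 1)"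
      by (rule integral_diff[OF gi]) auto
    finally show ?thesis using lampos by simp
  qed
  have c3: "integral {- lam..0} g + integral {0..lam} g = integral {- lam..lam} g"
    by (rule Henstock_Kurzweil_Integration.integral_combine) (use lampos gi in auto)
  have "choquet (borel_sub K) nu (\<lambda>\<xi>. \<xi> x) = integral {0..} g + integral {..0} (\<lambda>t. g t - 1)"
    unfolding choquet_def space_bs g_def L_def by simp
  also have "\<dots> = integral {- lam..lam} g - lam" using c1 c2 c3 by simp
  finally show ?thesis using I by simp
qed

lemma main: "\<exists>\<nu>. normalized_capacity (borel_sub K) \<nu> \<and>
           (\<forall>x. V x = choquet (borel_sub K) \<nu> (\<lambda>\<xi>. \<xi> x))"
proof (intro exI conjI allI)
  show "normalized_capacity (borel_sub K) nu"
    unfolding normalized_capacity_def space_bs using nu_empty nu_K nu_mono by auto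
  show "V x = choquet (borel_sub K) nu (\<lambda>\<xi>. \<xi> x)" for x by (rule repr)
qed

end

theorem theorem2p3:
  fixes e :: "'a::{ordered_real_vector,lattice}"
    and N :: "'a set"
    and V :: "'a \<Rightarrow> real"
  assumes "archimedean_riesz TYPE('a)"
    and "strong_unit e"
    and "order_ideal N" and "N \<noteq> UNIV" and "uniformly_closed N"
    and "V_normalized e V" and "V_monotone V" and "unit_additive e V"
    and "unit_modular e V" and "N_invariant N V"
  shows "\<exists>\<nu>. normalized_capacity (borel_sub (E_N e N)) \<nu> \<and>
           (\<forall>x. V x = choquet (borel_sub (E_N e N)) \<nu> (\<lambda>\<xi>. \<xi> x))"
proof -
  interpret vctx e N V using assms by unfold_locales
  show ?thesis by (rule main)
qed


end
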